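(* Let $\mathfrak{b}\subset\mathfrak{g}=\mathfrak{gl}(n+1,\mathbb{C})$ be a Borel subalgebra containing the Cartan subalgebra of diagonal matrices. Then $\mathfrak{b}$ contains strongly regular elements of $\mathfrak{g}$.
   Context: For $x\in\mathfrak{g}$ and $1\le i\le n+1$, $x_i$ denotes the upper left $i\times i$ submatrix of $x$, and $f_{i,j}(x)=\mathrm{Tr}(x_i^j)$ for $1\le j\le i\le n+1$. An element $x\in\mathfrak{g}$ is strongly regular if the differentials $\{df_{i,j}(x):1\le j\le i\le n+1\}$ are linearly independent in $T_x^*\mathfrak{g}$. *)

theory Defs
  imports "HOL-Analysis.Derivative" "Jordan_Normal_Form.Matrix"
begin

text \<open>Complex N x N matrices (here N = n+1) are elements of carrier_mat N N,
  i.e. the Lie algebra gl(N, C) with bracket [a,b] = a*b - b*a.\<close>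

definition lie_bracket :: "complex mat \<Rightarrow> complex mat \<Rightarrow> complex mat" where
  "lie_bracket a b = a * b - b * a"

fun mat_lincomb :: "nat \<Rightarrow> (nat \<Rightarrow> complex) \<Rightarrow> (nat \<Rightarrow> complex mat) \<Rightarrow> nat \<Rightarrow> complex mat" where
  "mat_lincomb N c A 0 = 0\<^sub>m N N"
| "mat_lincomb N c A (Suc m) = mat_lincomb N c A m + c m \<cdot>\<^sub>m A m"

definition mat_span :: "nat \<Rightarrow> complex mat set \<Rightarrow> complex mat set" where
  "mat_span N S = {mat_lincomb N c A m | c A m. \<forall>k<m. A k \<in> S}"

definition lie_subalgebra :: "nat \<Rightarrow> complex mat set \<Rightarrow> bool" where
  "lie_subalgebra N L \<longleftrightarrow> L \<subseteq> carrier_mat N N \<and> 0\<^sub>m N N \<in> L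
     \<and> (\<forall>a\<in>L. \<forall>b\<in>L. a + b \<in> L)
     \<and> (\<forall>t. \<forall>a\<in>L. t \<cdot>\<^sub>m a \<in> L)
     \<and> (\<forall>a\<in>L. \<forall>b\<in>L. lie_bracket a b \<in> L)"

fun derived_series :: "nat \<Rightarrow> complex mat set \<Rightarrow> nat \<Rightarrow> complex mat set" where
  "derived_series N L 0 = L"
| "derived_series N L (Suc k) =
     mat_span N {lie_bracket a b | a b. a \<in> derived_series N L k \<and> b \<in> derived_series N L k}"

definition solvable_lie :: "nat \<Rightarrow> complex mat set \<Rightarrow> bool" where
  "solvable_lie N L \<longleftrightarrow> (\<exists>k. derived_series N L k = {0\<^sub>m N N})"

definition borel_subalgebra :: "nat \<Rightarrow> complex mat set \<Rightarrow> bool" where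
  "borel_subalgebra N B \<longleftrightarrow> lie_subalgebra N B \<and> solvable_lie N B
     \<and> (\<forall>B'. lie_subalgebra N B' \<and> solvable_lie N B' \<and> B \<subseteq> B' \<longrightarrow> B' = B)"

definition diagonal_cartan :: "nat \<Rightarrow> complex mat set" where
  "diagonal_cartan N = {x \<in> carrier_mat N N. \<forall>i<N. \<forall>j<N. i \<noteq> j \<longrightarrow> x $$ (i, j) = 0}"

definition upper_left :: "nat \<Rightarrow> complex mat \<Rightarrow> complex mat" where
  "upper_left i x = mat i i (\<lambda>(a, b). x $$ (a, b))"

definition mat_trace :: "complex mat \<Rightarrow> complex" where
  "mat_trace A = (\<Sum>k<dim_row A. A $$ (k, k))"

definition f_ij :: "nat \<Rightarrow> nat \<Rightarrow> complex mat \<Rightarrow> complex" where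
  "f_ij i j x = mat_trace (upper_left i x ^\<^sub>m j)"

definition differential :: "(complex mat \<Rightarrow> complex) \<Rightarrow> complex mat \<Rightarrow> complex mat \<Rightarrow> complex" where
  "differential f x y = deriv (\<lambda>t::complex. f (x + t \<cdot>\<^sub>m y)) 0"

definition GZ_index :: "nat \<Rightarrow> (nat \<times> nat) set" where
  "GZ_index N = {(i, j). 1 \<le> j \<and> j \<le> i \<and> i \<le> N}"

definition strongly_regular :: "nat \<Rightarrow> complex mat \<Rightarrow> bool" where
  "strongly_regular N x \<longleftrightarrow> x \<in> carrier_mat N N \<and>
     (\<forall>c :: nat \<times> nat \<Rightarrow> complex.
        (\<forall>y\<in>carrier_mat N N. (\<Sum>(i, j)\<in>GZ_index N. c (i, j) * differential (f_ij i j) x y) = 0)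
        \<longrightarrow> (\<forall>p\<in>GZ_index N. c p = 0))"

end

theory Submission
  imports Defs "HOL-Computational_Algebra.Polynomial"
begin


lemma mult_entry:
  assumes "A \<in> carrier_mat n k" "B \<in> carrier_mat k m" "a < n" "b < m"
  shows "(A * B) $$ (a, b) = (\<Sum>c<k. A $$ (a, c) * B $$ (c, b))"
  using assms by (auto simp: scalar_prod_def atLeast0LessThan intro!: sum.cong)

lemma if01_mult: "(if P then 1 else 0) * (x::complex) = (if P then x else 0)"
  "x * (if P then 1 else 0) = (if P then x else 0)" by auto

definition EE :: "nat \<Rightarrow> nat \<Rightarrow> nat \<Rightarrow> complex mat" where
  "EE N a b = mat N N (\<lambda>(i, j). if i = a \<and> j = b then 1 else 0)"

lemma EE_carrier[simp]: "EE N a b \<in> carrier_mat N N" by (simp add: EE_def)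
lemma EE_index: "i < N \<Longrightarrow> j < N \<Longrightarrow> EE N a b $$ (i,j) = (if i = a \<and> j = b then 1 else 0)"
  by (simp add: EE_def)

lemma EE_mult_left:
  assumes "M \<in> carrier_mat N N" "b < N" "i < N" "j < N"
  shows "(EE N a b * M) $$ (i, j) = (if i = a then M $$ (b, j) else 0)"
  using assms by (simp add: mult_entry[of _ N N _ N] EE_index if01_mult sum.If_cases)

lemma EE_mult_right:
  assumes "M \<in> carrier_mat N N" "a < N" "i < N" "j < N"
  shows "(M * EE N a b) $$ (i, j) = (if j = b then M $$ (i, a) else 0)"
  using assms by (simp add: mult_entry[of _ N N _ N] EE_index if01_mult sum.If_cases)

lemma bracket_carrier[simp]: "a \<in> carrier_mat N N \<Longrightarrow> b \<in> carrier_mat N N \<Longrightarrow> lie_bracket a b \<in> carrier_mat N N"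
  by (simp add: lie_bracket_def minus_carrier_mat)

lemma bracket_index:
  assumes "A \<in> carrier_mat N N" "B \<in> carrier_mat N N" "i < N" "j < N"
  shows "lie_bracket A B $$ (i, j) = (A * B) $$ (i, j) - (B * A) $$ (i, j)"
  using assms by (simp add: lie_bracket_def)

lemma bracket_EE_left:
  assumes "M \<in> carrier_mat N N" "a < N" "i < N" "j < N"
  shows "lie_bracket (EE N a a) M $$ (i, j) = (if i = a then M $$ (a, j) else 0) - (if j = a then M $$ (i, a) else 0)"
  using assms by (subst bracket_index[of _ N]) (auto simp: EE_mult_left EE_mult_right)

lemma bracket_EE_right:
  assumes "M \<in> carrier_mat N N" "b < N" "i < N" "j < N"
  shows "lie_bracket M (EE N b b) $$ (i, j) = (if j = b then M $$ (i, b) else 0) - (if i = b then M $$ (b, j) else 0)"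
  using assms by (subst bracket_index[of _ N]) (auto simp: EE_mult_left EE_mult_right)

lemma EE_diag_cartan: "a < N \<Longrightarrow> EE N a a \<in> diagonal_cartan N"
  by (auto simp: diagonal_cartan_def EE_index)

lemma extract_EE:
  assumes L: "lie_subalgebra N B" and D: "diagonal_cartan N \<subseteq> B" and x: "x \<in> B"
    and ab: "a < N" "b < N" "a \<noteq> b" "x $$ (a, b) \<noteq> 0"
  shows "EE N a b \<in> B"
proof -
  have xc: "x \<in> carrier_mat N N" using L x by (auto simp: lie_subalgebra_def)
  have Ea: "EE N a a \<in> B" and Eb: "EE N b b \<in> B" using D EE_diag_cartan ab by auto
  define y where "y = lie_bracket (EE N a a) x"
  define z where "z = lie_bracket y (EE N b b)"
  define w where "w = lie_bracket (EE N a a) z"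
  have yB: "y \<in> B" using L Ea x by (auto simp: lie_subalgebra_def y_def)
  have zB: "z \<in> B" using L Eb yB by (auto simp: lie_subalgebra_def z_def)
  have wB: "w \<in> B" using L Ea zB by (auto simp: lie_subalgebra_def w_def)
  have yc: "y \<in> carrier_mat N N" and zc: "z \<in> carrier_mat N N" and wc: "w \<in> carrier_mat N N"
    using xc by (auto simp: y_def z_def w_def)
  have ye: "\<And>i j. i < N \<Longrightarrow> j < N \<Longrightarrow> y $$ (i,j) = (if i = a then x $$ (a, j) else 0) - (if j = a then x $$ (i, a) else 0)"
    unfolding y_def using xc ab by (simp add: bracket_EE_left)
  have ze: "\<And>i j. i < N \<Longrightarrow> j < N \<Longrightarrow> z $$ (i,j) = (if j = b then y $$ (i, b) else 0) - (if i = b then y $$ (b, j) else 0)"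
    unfolding z_def using yc ab by (simp add: bracket_EE_right)
  have we: "\<And>i j. i < N \<Longrightarrow> j < N \<Longrightarrow> w $$ (i,j) = (if i = a then z $$ (a, j) else 0) - (if j = a then z $$ (i, a) else 0)"
    unfolding w_def using zc ab by (simp add: bracket_EE_left)
  have eq: "EE N a b = (1 / (2 * x $$ (a, b))) \<cdot>\<^sub>m (z + w)"
  proof (rule eq_matI)
    fix i j assume ij: "i < dim_row ((1 / (2 * x $$ (a, b))) \<cdot>\<^sub>m (z + w))" "j < dim_col ((1 / (2 * x $$ (a, b))) \<cdot>\<^sub>m (z + w))"
    then have ij: "i < N" "j < N" using zc wc by auto
    show "EE N a b $$ (i, j) = ((1 / (2 * x $$ (a, b))) \<cdot>\<^sub>m (z + w)) $$ (i, j)"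
      using ij ab zc wc by (auto simp: EE_index ze we ye)
  qed (use zc wc in \<open>auto simp: EE_def\<close>)
  show ?thesis unfolding eq using L zB wB by (auto simp: lie_subalgebra_def)
qed

lemma DS_bracket:
  assumes "a \<in> derived_series N L k" "b \<in> derived_series N L k"
    "a \<in> carrier_mat N N" "b \<in> carrier_mat N N"
  shows "c \<cdot>\<^sub>m lie_bracket a b \<in> derived_series N L (Suc k)"
proof -
  have "mat_lincomb N (\<lambda>_. c) (\<lambda>_. lie_bracket a b) 1 = c \<cdot>\<^sub>m lie_bracket a b"
    using assms by (simp add: left_add_zero_mat)
  then show ?thesis using assms unfolding derived_series.simps mat_span_def
    by (smt (verit, ccfv_threshold) less_one mem_Collect_eq)
qed

lemma smult_one_mat'[simp]: "(1::complex) \<cdot>\<^sub>m A = A" by (rule eq_matI) auto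

lemma smult_smult_mat: "(a::complex) \<cdot>\<^sub>m (b \<cdot>\<^sub>m A) = (a * b) \<cdot>\<^sub>m A" by (rule eq_matI) auto

lemma EE_dims[simp]: "dim_row (EE N a b) = N" "dim_col (EE N a b) = N" by (auto simp: EE_def)

lemma bracket_dims[simp]: "A \<in> carrier_mat N N \<Longrightarrow> B \<in> carrier_mat N N \<Longrightarrow> dim_row (lie_bracket A B) = N"
   "A \<in> carrier_mat N N \<Longrightarrow> B \<in> carrier_mat N N \<Longrightarrow> dim_col (lie_bracket A B) = N"
  by (auto simp: lie_bracket_def)

lemma H_index: "i < N \<Longrightarrow> j < N \<Longrightarrow> (EE N a a - EE N b b) $$ (i, j) =
   (if i = a \<and> j = a then 1 else 0) - (if i = b \<and> j = b then 1 else 0)"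
  by (simp add: EE_index)

lemma EE_bracket_ab_ba:
  assumes "a < N" "b < N" "a \<noteq> b"
  shows "lie_bracket (EE N a b) (EE N b a) = EE N a a - EE N b b"
  by (rule eq_matI) (use assms in \<open>auto simp del: index_mult_mat simp: bracket_index[of _ N] EE_mult_left EE_index\<close>)

lemma EE_bracket_H_ab:
  assumes "a < N" "b < N" "a \<noteq> b"
  shows "lie_bracket (EE N a a - EE N b b) (EE N a b) = 2 \<cdot>\<^sub>m EE N a b"
proof (rule eq_matI)
  fix i j assume "i < dim_row (2 \<cdot>\<^sub>m EE N a b)" "j < dim_col (2 \<cdot>\<^sub>m EE N a b)"
  then have ij: "i < N" "j < N" by auto
  have Hc: "EE N a a - EE N b b \<in> carrier_mat N N" by (simp add: minus_carrier_mat)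
  show "lie_bracket (EE N a a - EE N b b) (EE N a b) $$ (i, j) = (2 \<cdot>\<^sub>m EE N a b) $$ (i, j)"
    using assms ij Hc by (auto simp del: index_mult_mat simp: bracket_index[of _ N] EE_mult_left[of _ N] EE_mult_right[of _ N] H_index EE_index)
qed (auto simp: minus_carrier_mat)

lemma EE_bracket_H_ba:
  assumes "a < N" "b < N" "a \<noteq> b"
  shows "lie_bracket (EE N a a - EE N b b) (EE N b a) = (-2) \<cdot>\<^sub>m EE N b a"
proof (rule eq_matI)
  fix i j assume "i < dim_row ((-2) \<cdot>\<^sub>m EE N b a)" "j < dim_col ((-2) \<cdot>\<^sub>m EE N b a)"
  then have ij: "i < N" "j < N" by auto
  have Hc: "EE N a a - EE N b b \<in> carrier_mat N N" by (simp add: minus_carrier_mat)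
  show "lie_bracket (EE N a a - EE N b b) (EE N b a) $$ (i, j) = ((-2) \<cdot>\<^sub>m EE N b a) $$ (i, j)"
    using assms ij Hc by (auto simp del: index_mult_mat simp: bracket_index[of _ N] EE_mult_left[of _ N] EE_mult_right[of _ N] H_index EE_index)
qed (auto simp: minus_carrier_mat)

lemma antisym_EE:
  assumes L: "lie_subalgebra N B" and S: "solvable_lie N B"
    and ab: "a < N" "b < N" "a \<noteq> b" and E1: "EE N a b \<in> B" and E2: "EE N b a \<in> B"
  shows False
proof -
  define H where "H = EE N a a - EE N b b"
  have Hc: "H \<in> carrier_mat N N" by (simp add: H_def minus_carrier_mat)
  have b1: "H = 1 \<cdot>\<^sub>m lie_bracket (EE N a b) (EE N b a)"
    using EE_bracket_ab_ba[OF ab] Hc by (simp add: H_def)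
  have b2: "EE N a b = (1/2) \<cdot>\<^sub>m lie_bracket H (EE N a b)"
    using EE_bracket_H_ab[OF ab] by (simp add: H_def smult_smult_mat)
  have b3: "EE N b a = (-1/2) \<cdot>\<^sub>m lie_bracket H (EE N b a)"
    using EE_bracket_H_ba[OF ab] by (simp add: H_def smult_smult_mat)
  have all: "EE N a b \<in> derived_series N B k \<and> EE N b a \<in> derived_series N B k \<and> H \<in> derived_series N B k" for k
  proof (induction k)
    case 0
    have "H \<in> B" using L E1 E2 EE_bracket_ab_ba[OF ab] unfolding lie_subalgebra_def H_def by metis
    then show ?case using E1 E2 by simp
  next
    case (Suc k)
    then show ?case using DS_bracket[of _ N B k] Hc b1 b2 b3 by (metis EE_carrier)
  qed
  obtain k where "derived_series N B k = {0\<^sub>m N N}" using S by (auto simp: solvable_lie_def)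
  then have "EE N a b = 0\<^sub>m N N" using all[of k] by auto
  then have "EE N a b $$ (a, b) = 0\<^sub>m N N $$ (a, b)" by simp
  then show False using ab by (simp add: EE_index)
qed




definition AR :: "nat \<Rightarrow> (nat \<times> nat) set \<Rightarrow> complex mat set" where
  "AR N R = {x \<in> carrier_mat N N. \<forall>a<N. \<forall>b<N. a \<noteq> b \<and> (a, b) \<notin> R \<longrightarrow> x $$ (a, b) = 0}"

definition rk :: "nat \<Rightarrow> (nat \<times> nat) set \<Rightarrow> nat \<Rightarrow> nat" where
  "rk N R a = card {c. c < N \<and> (c, a) \<in> R}"

definition WW :: "nat \<Rightarrow> (nat \<times> nat) set \<Rightarrow> nat \<Rightarrow> complex mat set" where
  "WW N R k = {x \<in> carrier_mat N N. \<forall>a<N. \<forall>b<N. x $$ (a, b) \<noteq> 0 \<longrightarrow>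
      (a = b \<or> (a, b) \<in> R) \<and> rk N R a + k \<le> rk N R b}"

locale spo =
  fixes N :: nat and R :: "(nat \<times> nat) set"
  assumes irr: "(a, a) \<notin> R"
    and trn: "(a, b) \<in> R \<Longrightarrow> (b, c) \<in> R \<Longrightarrow> (a, c) \<in> R"
begin

lemma rk_less: assumes "(a, b) \<in> R" "a < N" shows "rk N R a < rk N R b"
proof -
  have "{c. c < N \<and> (c, a) \<in> R} \<subset> {c. c < N \<and> (c, b) \<in> R}"
  proof
    show "{c. c < N \<and> (c, a) \<in> R} \<subseteq> {c. c < N \<and> (c, b) \<in> R}"
      using assms(1) trn by blast
    show "{c. c < N \<and> (c, a) \<in> R} \<noteq> {c. c < N \<and> (c, b) \<in> R}"
      using assms irr by blast
  qed
  then show ?thesis unfolding rk_def by (rule psubset_card_mono[rotated]) simp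
qed

lemma rk_bound: assumes "b < N" shows "rk N R b < N"
proof -
  have "{c. c < N \<and> (c, b) \<in> R} \<subseteq> {..<N} - {b}" using irr by auto
  then have "rk N R b \<le> card ({..<N} - {b})" unfolding rk_def by (rule card_mono[rotated]) simp
  then show ?thesis using assms by simp
qed

lemma W0: "WW N R 0 = AR N R"
proof -
  have "(a = b \<or> (a, b) \<in> R) \<and> rk N R a \<le> rk N R b \<longleftrightarrow> (a = b \<or> (a, b) \<in> R)" if "a < N" for a b
    using rk_less[OF _ that] by fastforce
  then show ?thesis unfolding WW_def AR_def by auto
qed

lemma W_mono: "k \<le> l \<Longrightarrow> WW N R l \<subseteq> WW N R k"
  unfolding WW_def by fastforce

lemma W_zero: "0\<^sub>m N N \<in> WW N R k" unfolding WW_def by auto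

lemma W_add: assumes x: "x \<in> WW N R k" and y: "y \<in> WW N R k" shows "x + y \<in> WW N R k"
proof -
  have xc: "x \<in> carrier_mat N N" and yc: "y \<in> carrier_mat N N" using x y by (auto simp: WW_def)
  {
    fix a b assume ab: "a < N" "b < N" "(x + y) $$ (a, b) \<noteq> 0"
    then have "x $$ (a, b) \<noteq> 0 \<or> y $$ (a, b) \<noteq> 0" using xc yc by auto
    then have "(a = b \<or> (a, b) \<in> R) \<and> rk N R a + k \<le> rk N R b"
      using x y ab unfolding WW_def by blast
  }
  then show ?thesis using xc yc unfolding WW_def by simp
qed

lemma W_minus: assumes x: "x \<in> WW N R k" and y: "y \<in> WW N R k" shows "x - y \<in> WW N R k"
proof -
  have xc: "x \<in> carrier_mat N N" and yc: "y \<in> carrier_mat N N" using x y by (auto simp: WW_def)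
  {
    fix a b assume ab: "a < N" "b < N" "(x - y) $$ (a, b) \<noteq> 0"
    then have "x $$ (a, b) \<noteq> 0 \<or> y $$ (a, b) \<noteq> 0" using xc yc by auto
    then have "(a = b \<or> (a, b) \<in> R) \<and> rk N R a + k \<le> rk N R b"
      using x y ab unfolding WW_def by blast
  }
  then show ?thesis using xc yc unfolding WW_def by (simp add: minus_carrier_mat)
qed

lemma W_smult: assumes x: "x \<in> WW N R k" shows "t \<cdot>\<^sub>m x \<in> WW N R k"
proof -
  have xc: "x \<in> carrier_mat N N" using x by (auto simp: WW_def)
  {
    fix a b assume ab: "a < N" "b < N" "(t \<cdot>\<^sub>m x) $$ (a, b) \<noteq> 0"
    then have "x $$ (a, b) \<noteq> 0" using xc by auto
    then have "(a = b \<or> (a, b) \<in> R) \<and> rk N R a + k \<le> rk N R b"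
      using x ab unfolding WW_def by blast
  }
  then show ?thesis using xc unfolding WW_def by simp
qed

lemma W_lincomb: "(\<forall>j<m. A j \<in> WW N R k) \<Longrightarrow> mat_lincomb N c A m \<in> WW N R k"
  by (induction m) (auto intro!: W_add W_smult W_zero)

lemma sum_single: "finite A \<Longrightarrow> a \<in> A \<Longrightarrow> (\<And>c. c \<in> A \<Longrightarrow> c \<noteq> a \<Longrightarrow> f c = 0) \<Longrightarrow> sum f A = f a"
  using sum.remove[of A a f] sum.neutral[of "A - {a}" f] by auto

lemma sum_nz: "(\<Sum>c\<in>A. f c) \<noteq> 0 \<Longrightarrow> \<exists>c\<in>A. f c \<noteq> 0"
  by (meson sum.neutral)

lemma W_mult: assumes x: "x \<in> WW N R k" and y: "y \<in> WW N R l" shows "x * y \<in> WW N R (k + l)"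
proof -
  have xc: "x \<in> carrier_mat N N" and yc: "y \<in> carrier_mat N N" using x y by (auto simp: WW_def)
  have xw: "\<And>a b. a < N \<Longrightarrow> b < N \<Longrightarrow> x $$ (a, b) \<noteq> 0 \<Longrightarrow> (a = b \<or> (a, b) \<in> R) \<and> rk N R a + k \<le> rk N R b"
    using x unfolding WW_def by blast
  have yw: "\<And>a b. a < N \<Longrightarrow> b < N \<Longrightarrow> y $$ (a, b) \<noteq> 0 \<Longrightarrow> (a = b \<or> (a, b) \<in> R) \<and> rk N R a + l \<le> rk N R b"
    using y unfolding WW_def by blast
  have main: "(a = b \<or> (a, b) \<in> R) \<and> rk N R a + (k + l) \<le> rk N R b"
    if ab: "a < N" "b < N" "(x * y) $$ (a, b) \<noteq> 0" for a b
  proof -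
    have "(\<Sum>c<N. x $$ (a, c) * y $$ (c, b)) \<noteq> 0" using ab(3) mult_entry[OF xc yc ab(1,2)] by argo
    from sum_nz[OF this] obtain c where c: "c < N" "x $$ (a, c) * y $$ (c, b) \<noteq> 0"
      by auto
    then have c1: "(a = c \<or> (a, c) \<in> R) \<and> rk N R a + k \<le> rk N R c"
      and c2: "(c = b \<or> (c, b) \<in> R) \<and> rk N R c + l \<le> rk N R b"
      using xw[of a c] yw[of c b] ab by auto
    have "a = b \<or> (a, b) \<in> R" using c1 c2 trn[of a c b] by blast
    moreover have "rk N R a + (k + l) \<le> rk N R b" using c1 c2 by linarith
    ultimately show ?thesis by blast
  qed
  have "x * y \<in> carrier_mat N N" using xc yc by simp
  then show ?thesis unfolding WW_def using main by blast
qed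

lemma W0_bracket: assumes x: "x \<in> WW N R 0" and y: "y \<in> WW N R 0"
  shows "lie_bracket x y \<in> WW N R 1"
proof -
  have xc: "x \<in> carrier_mat N N" and yc: "y \<in> carrier_mat N N" using x y by (auto simp: WW_def)
  have m1: "x * y \<in> WW N R 0" and m2: "y * x \<in> WW N R 0" using W_mult[OF x y] W_mult[OF y x] by auto
  have diag: "(x * y) $$ (a, a) = x $$ (a, a) * y $$ (a, a)"
    if xx: "x \<in> WW N R 0" and yy: "y \<in> WW N R 0" and a: "a < N" for x y a
  proof -
    have xc: "x \<in> carrier_mat N N" and yc: "y \<in> carrier_mat N N" using xx yy by (auto simp: WW_def)
    have "(\<Sum>c<N. x $$ (a, c) * y $$ (c, a)) = x $$ (a, a) * y $$ (a, a)"
    proof (rule sum_single)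
      fix c assume c: "c \<in> {..<N}" "c \<noteq> a"
      show "x $$ (a, c) * y $$ (c, a) = 0"
      proof (rule ccontr)
        assume "x $$ (a, c) * y $$ (c, a) \<noteq> 0"
        then have "(a, c) \<in> R" "(c, a) \<in> R" using xx yy c a by (auto simp: WW_def)
        then show False using trn irr by blast
      qed
    qed (use a in auto)
    then show ?thesis using mult_entry[OF xc yc a a] by simp
  qed
  {
    fix a b assume ab: "a < N" "b < N" "lie_bracket x y $$ (a, b) \<noteq> 0"
    then have "(x * y) $$ (a, b) \<noteq> 0 \<or> (y * x) $$ (a, b) \<noteq> 0"
      using bracket_index[OF xc yc] by fastforce
    then have rel: "(a = b \<or> (a, b) \<in> R)" and le: "rk N R a \<le> rk N R b"
      using m1 m2 ab by (auto simp: WW_def)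
    have "a \<noteq> b"
    proof
      assume "a = b"
      then show False using ab diag[OF x y] diag[OF y x] bracket_index[OF xc yc] by simp
    qed
    then have "(a = b \<or> (a, b) \<in> R) \<and> rk N R a + 1 \<le> rk N R b"
      using rel rk_less ab by fastforce
  }
  then show ?thesis using xc yc by (auto simp: WW_def)
qed

lemma W_bracket: assumes x: "x \<in> WW N R k" and y: "y \<in> WW N R k"
  shows "lie_bracket x y \<in> WW N R (Suc k)"
proof (cases "k = 0")
  case True
  then show ?thesis using W0_bracket x y by simp
next
  case False
  have "lie_bracket x y \<in> WW N R (k + k)"
    unfolding lie_bracket_def using W_minus W_mult x y by blast
  then show ?thesis using W_mono[of "Suc k" "k + k"] False by auto
qed

lemma DS_W: "derived_series N (AR N R) k \<subseteq> WW N R k"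
proof (induction k)
  case 0
  then show ?case using W0 by simp
next
  case (Suc k)
  show ?case
  proof
    fix z assume "z \<in> derived_series N (AR N R) (Suc k)"
    then obtain c A m where z: "z = mat_lincomb N c A m"
      and A: "\<forall>j<m. A j \<in> {lie_bracket a b |a b. a \<in> derived_series N (AR N R) k \<and> b \<in> derived_series N (AR N R) k}"
      by (auto simp: mat_span_def)
    have "\<forall>j<m. A j \<in> WW N R (Suc k)"
    proof (intro allI impI)
      fix j assume "j < m"
      then obtain a b where ab: "A j = lie_bracket a b" "a \<in> derived_series N (AR N R) k" "b \<in> derived_series N (AR N R) k"
        using A by blast
      then show "A j \<in> WW N R (Suc k)" using Suc.IH W_bracket[of a k b] by auto
    qed
    then show "z \<in> WW N R (Suc k)" using z W_lincomb by simp
  qed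
qed

lemma WN: "WW N R N \<subseteq> {0\<^sub>m N N}"
proof
  fix x assume x: "x \<in> WW N R N"
  have xc: "x \<in> carrier_mat N N" using x by (auto simp: WW_def)
  have xw: "\<And>a b. a < N \<Longrightarrow> b < N \<Longrightarrow> x $$ (a, b) \<noteq> 0 \<Longrightarrow> rk N R a + N \<le> rk N R b"
    using x unfolding WW_def by blast
  have "x = 0\<^sub>m N N"
  proof (rule eq_matI)
    fix a b assume ab: "a < dim_row (0\<^sub>m N N)" "b < dim_col (0\<^sub>m N N)"
    then have ab': "a < N" "b < N" by auto
    have "x $$ (a, b) = 0"
    proof (rule ccontr)
      assume "x $$ (a, b) \<noteq> 0"
      then have "rk N R a + N \<le> rk N R b" using xw ab' by blast
      then show False using rk_bound[OF ab'(2)] by linarith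
    qed
    then show "x $$ (a, b) = 0\<^sub>m N N $$ (a, b)" using ab' by simp
  qed (use xc in auto)
  then show "x \<in> {0\<^sub>m N N}" by simp
qed

lemma AR_solvable: assumes "N > 0" shows "solvable_lie N (AR N R)"
proof -
  obtain M where M: "N = Suc M" using assms gr0_conv_Suc by auto
  have "0\<^sub>m N N \<in> derived_series N (AR N R) N"
    unfolding M derived_series.simps mat_span_def
    by (rule CollectI, rule exI[of _ "\<lambda>_. 0"], rule exI[of _ "\<lambda>_. 0\<^sub>m N N"], rule exI[of _ 0]) (simp add: M)
  then have "derived_series N (AR N R) N = {0\<^sub>m N N}" using DS_W[of N] WN by blast
  then show ?thesis unfolding solvable_lie_def by blast
qed

lemma AR_lie: "lie_subalgebra N (AR N R)"
proof -
  have br: "lie_bracket a b \<in> AR N R" if "a \<in> AR N R" "b \<in> AR N R" for a b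
  proof -
    have "lie_bracket a b \<in> WW N R 1" using W_bracket[of a 0 b] that W0 by simp
    then show ?thesis using W_mono[of 0 1] W0 by blast
  qed
  have car: "AR N R \<subseteq> carrier_mat N N" unfolding AR_def by blast
  have z: "0\<^sub>m N N \<in> AR N R" using W_zero[of 0] W0 by simp
  have ad: "a + b \<in> AR N R" if "a \<in> AR N R" "b \<in> AR N R" for a b
    using W_add[of a 0 b] that W0 by simp
  have sm: "t \<cdot>\<^sub>m a \<in> AR N R" if "a \<in> AR N R" for a t
    using W_smult[of a 0 t] that W0 by simp
  show ?thesis unfolding lie_subalgebra_def
    apply (intro conjI ballI allI)
    using br car z ad sm by auto
qed

end




lemma EE_bracket_chain:
  assumes "a < N" "b < N" "c < N" "a \<noteq> c"
  shows "lie_bracket (EE N a b) (EE N b c) = EE N a c"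
  by (rule eq_matI) (use assms in \<open>auto simp del: index_mult_mat simp: bracket_index[of _ N] EE_mult_left EE_index\<close>)

locale borel_setup =
  fixes N :: nat and B :: "complex mat set"
  assumes bor: "borel_subalgebra N B" and cart: "diagonal_cartan N \<subseteq> B" and Npos: "N > 0"
begin

definition S :: "(nat \<times> nat) set" where
  "S = {(a, b). a < N \<and> b < N \<and> a \<noteq> b \<and> EE N a b \<in> B}"

lemma L: "lie_subalgebra N B" and solv: "solvable_lie N B"
  and maxi: "\<And>B'. lie_subalgebra N B' \<Longrightarrow> solvable_lie N B' \<Longrightarrow> B \<subseteq> B' \<Longrightarrow> B' = B"
  using bor unfolding borel_subalgebra_def by blast+

lemma S_antisym: "(a, b) \<in> S \<Longrightarrow> (b, a) \<notin> S"
  using antisym_EE[OF L solv] unfolding S_def by blast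

lemma S_irr: "(a, a) \<notin> S" unfolding S_def by blast

lemma S_trans: assumes "(a, b) \<in> S" "(b, c) \<in> S" shows "(a, c) \<in> S"
proof -
  have ac: "a \<noteq> c" using assms S_antisym by blast
  have r: "a < N" "b < N" "c < N" "EE N a b \<in> B" "EE N b c \<in> B" using assms unfolding S_def by auto
  have "EE N a c \<in> B" using EE_bracket_chain[OF r(1-3) ac] L r(4,5) unfolding lie_subalgebra_def by metis
  then show ?thesis using r ac unfolding S_def by blast
qed

lemma B_sub: "B \<subseteq> AR N S"
proof
  fix x assume x: "x \<in> B"
  have xc: "x \<in> carrier_mat N N" using L x unfolding lie_subalgebra_def by blast
  have "x $$ (a, b) = 0" if "a < N" "b < N" "a \<noteq> b" "(a, b) \<notin> S" for a b
  proof (rule ccontr)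
    assume "x $$ (a, b) \<noteq> 0"
    then have "EE N a b \<in> B" using extract_EE[OF L cart x] that by blast
    then show False using that unfolding S_def by blast
  qed
  then show "x \<in> AR N S" using xc unfolding AR_def by blast
qed

lemma AR_eq: assumes "spo R" "S \<subseteq> R" shows "AR N R = B"
proof (rule maxi)
  show "lie_subalgebra N (AR N R)" using spo.AR_lie[OF assms(1)] .
  show "solvable_lie N (AR N R)" using spo.AR_solvable[OF assms(1) Npos] .
  have "AR N S \<subseteq> AR N R" using assms(2) unfolding AR_def by blast
  then show "B \<subseteq> AR N R" using B_sub by blast
qed

lemma spoS: "spo S" unfolding spo_def using S_irr S_trans by blast

lemma B_eq: "B = AR N S" using AR_eq[OF spoS] by simp

lemma EE_AR: assumes "a < N" "b < N" "(a, b) \<in> R" shows "EE N a b \<in> AR N R"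
  using assms unfolding AR_def by (auto simp: EE_index)

lemma S_total: assumes ab: "a < N" "b < N" "a \<noteq> b" shows "(a, b) \<in> S \<or> (b, a) \<in> S"
proof (rule ccontr)
  assume nab: "\<not> ((a, b) \<in> S \<or> (b, a) \<in> S)"
  then have nab1: "(a, b) \<notin> S" and nab2: "(b, a) \<notin> S" by auto
  define S' where "S' = {(c, d). (c, d) \<in> S \<or> ((c = a \<or> (c, a) \<in> S) \<and> (d = b \<or> (b, d) \<in> S))}"
  have mem: "(c, d) \<in> S' \<longleftrightarrow> (c, d) \<in> S \<or> ((c = a \<or> (c, a) \<in> S) \<and> (d = b \<or> (b, d) \<in> S))" for c d
    unfolding S'_def by simp
  have irr: "(c, c) \<notin> S'" for c
  proof
    assume "(c, c) \<in> S'"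
    then have h: "(c, c) \<in> S \<or> ((c = a \<or> (c, a) \<in> S) \<and> (c = b \<or> (b, c) \<in> S))" using mem by blast
    show False
    proof (cases "(c, c) \<in> S")
      case True then show False using S_irr by blast
    next
      case False
      then have h1: "c = a \<or> (c, a) \<in> S" and h2: "c = b \<or> (b, c) \<in> S" using h by auto
      show False
      proof (cases "c = a")
        case True
        then show False using h2 ab(3) nab2 by auto
      next
        case False
        then have ca: "(c, a) \<in> S" using h1 by simp
        show False
        proof (cases "c = b")
          case True then show False using ca nab2 by simp
        next
          case False
          then have "(b, c) \<in> S" using h2 by simp
          then have "(b, a) \<in> S" using S_trans ca by blast
          then show False using nab2 by simp
        qed
      qed
    qed
  qed
  have trn: "(c, e) \<in> S'" if "(c, d) \<in> S'" "(d, e) \<in> S'" for c d e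
  proof -
    have 1: "(c, d) \<in> S \<or> ((c = a \<or> (c, a) \<in> S) \<and> (d = b \<or> (b, d) \<in> S))" using that(1) mem by blast
    have 2: "(d, e) \<in> S \<or> ((d = a \<or> (d, a) \<in> S) \<and> (e = b \<or> (b, e) \<in> S))" using that(2) mem by blast
    have "(c, e) \<in> S \<or> ((c = a \<or> (c, a) \<in> S) \<and> (e = b \<or> (b, e) \<in> S))"
    proof (cases "(c, d) \<in> S")
      case cd: True
      show ?thesis
      proof (cases "(d, e) \<in> S")
        case True then show ?thesis using S_trans cd by blast
      next
        case False
        then have "(d = a \<or> (d, a) \<in> S)" "(e = b \<or> (b, e) \<in> S)" using 2 by auto
        moreover have "(d = a \<or> (d, a) \<in> S) \<Longrightarrow> (c, a) \<in> S" using cd S_trans by blast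
        ultimately show ?thesis by blast
      qed
    next
      case False
      then have c1: "c = a \<or> (c, a) \<in> S" and d1: "d = b \<or> (b, d) \<in> S" using 1 by auto
      show ?thesis
      proof (cases "(d, e) \<in> S")
        case True
        then have "(b, e) \<in> S" using d1 S_trans by blast
        then show ?thesis using c1 by blast
      next
        case False
        then have d2: "d = a \<or> (d, a) \<in> S" using 2 by auto
        have "b = a \<or> (b, a) \<in> S"
        proof (cases "d = b")
          case True then show ?thesis using d2 by simp
        next
          case False
          then have "(b, d) \<in> S" using d1 by simp
          then show ?thesis using d2 S_trans by blast
        qed
        then show ?thesis using ab(3) nab2 by simp
      qed
    qed
    then show ?thesis using mem by blast
  qed
  have "spo S'" unfolding spo_def using irr trn by blast
  moreover have "S \<subseteq> S'" using mem by auto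
  ultimately have "AR N S' = B" by (rule AR_eq)
  moreover have "EE N a b \<in> AR N S'" using EE_AR[OF ab(1,2)] mem by simp
  ultimately have "EE N a b \<in> B" by simp
  then show False using nab1 ab unfolding S_def by blast
qed

end




lemma telescope:
  fixes \<kappa> :: "nat \<Rightarrow> int" and \<rho> :: "nat \<Rightarrow> complex"
  assumes "finite J" "inj_on \<kappa> J"
  shows "(\<Sum>e\<in>J. (\<rho> e - 1) * (\<Prod>d\<in>{d\<in>J. \<kappa> e < \<kappa> d}. \<rho> d)) = (\<Prod>d\<in>J. \<rho> d) - 1"
  using assms
proof (induction J rule: finite_ranking_induct[where f = \<kappa>])
  case empty
  then show ?case by simp
next
  case (insert x J)
  show ?case
  proof (cases "x \<in> J")
    case True
    then show ?thesis using insert by (simp add: insert_absorb)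
  next
    case False
    have inj: "inj_on \<kappa> J" using insert(4) by (simp add: inj_on_insert)
    have lt: "\<kappa> y < \<kappa> x" if y: "y \<in> J" for y
    proof -
      have "\<kappa> y \<noteq> \<kappa> x"
      proof
        assume "\<kappa> y = \<kappa> x"
        then have "y = x" by (rule inj_onD[OF insert(4)]) (use y in auto)
        then show False using False y by simp
      qed
      then show ?thesis using insert(2)[OF y] by simp
    qed
    have e1: "{d \<in> insert x J. \<kappa> x < \<kappa> d} = {}" using lt by force
    have e2: "{d \<in> insert x J. \<kappa> e < \<kappa> d} = insert x {d \<in> J. \<kappa> e < \<kappa> d}" if "e \<in> J" for e
      using lt[OF that] by auto
    have "(\<Sum>e\<in>insert x J. (\<rho> e - 1) * (\<Prod>d\<in>{d\<in>insert x J. \<kappa> e < \<kappa> d}. \<rho> d))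
        = (\<rho> x - 1) + (\<Sum>e\<in>J. (\<rho> e - 1) * (\<Prod>d\<in>{d\<in>insert x J. \<kappa> e < \<kappa> d}. \<rho> d))"
      unfolding sum.insert[OF insert(1) False] e1 by simp
    also have "(\<Sum>e\<in>J. (\<rho> e - 1) * (\<Prod>d\<in>{d\<in>insert x J. \<kappa> e < \<kappa> d}. \<rho> d))
        = (\<Sum>e\<in>J. \<rho> x * ((\<rho> e - 1) * (\<Prod>d\<in>{d\<in>J. \<kappa> e < \<kappa> d}. \<rho> d)))"
    proof (rule sum.cong)
      fix e assume e: "e \<in> J"
      have "finite {d \<in> J. \<kappa> e < \<kappa> d}" using insert(1) by simp
      moreover have "x \<notin> {d \<in> J. \<kappa> e < \<kappa> d}" using False by simp
      ultimately show "(\<rho> e - 1) * (\<Prod>d\<in>{d\<in>insert x J. \<kappa> e < \<kappa> d}. \<rho> d) = \<rho> x * ((\<rho> e - 1) * (\<Prod>d\<in>{d\<in>J. \<kappa> e < \<kappa> d}. \<rho> d))"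
        unfolding e2[OF e] by simp
    qed simp
    also have "\<dots> = \<rho> x * ((\<Prod>d\<in>J. \<rho> d) - 1)"
      using insert(3)[OF inj] by (simp add: sum_distrib_left[symmetric])
    finally show ?thesis using False insert(1) by (simp add: algebra_simps)
  qed
qed

definition Gm :: "(nat \<Rightarrow> int) \<Rightarrow> (nat \<Rightarrow> complex) \<Rightarrow> nat \<Rightarrow> nat \<Rightarrow> complex" where
  "Gm \<kappa> lam a b = (if a = b then lam a else if \<kappa> a < \<kappa> b then 1 else 0)"

lemma eig:
  fixes \<kappa> :: "nat \<Rightarrow> int" and lam :: "nat \<Rightarrow> complex"
  assumes inj: "inj_on \<kappa> {..<i}" and c: "c < i"
    and sep: "\<And>d. d < i \<Longrightarrow> d \<noteq> c \<Longrightarrow> lam c - lam d \<noteq> 0 \<and> lam c - lam d + 1 \<noteq> 0"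
  shows "\<exists>v. (\<forall>a<i. (\<Sum>b<i. Gm \<kappa> lam a b * v b) = lam c * v a) \<and> (\<forall>a<i. \<kappa> a \<le> \<kappa> c \<longrightarrow> v a \<noteq> 0)"
proof -
  define \<rho> where "\<rho> d = 1 + 1 / (lam c - lam d)" for d
  define J where "J a = {d. d < i \<and> \<kappa> a < \<kappa> d \<and> \<kappa> d < \<kappa> c}" for a
  define v where "v a = (if a = c then 1 else if \<kappa> a < \<kappa> c then (1 / (lam c - lam a)) * (\<Prod>d\<in>J a. \<rho> d) else 0)" for a
  have Jfin: "finite (J a)" for a unfolding J_def by simp
  have kinj: "a < i \<Longrightarrow> b < i \<Longrightarrow> \<kappa> a = \<kappa> b \<Longrightarrow> a = b" for a b using inj by (auto dest: inj_onD)
  have rho_nz: "\<rho> d \<noteq> 0" if "d < i" "d \<noteq> c" for d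
  proof -
    have "\<rho> d = (lam c - lam d + 1) / (lam c - lam d)" using sep[OF that] by (simp add: \<rho>_def field_simps)
    then show ?thesis using sep[OF that] by simp
  qed
  have sumeq: "(\<Sum>b<i. Gm \<kappa> lam a b * v b) = lam a * v a + (\<Sum>b\<in>{b. b < i \<and> \<kappa> a < \<kappa> b}. v b)" if a: "a < i" for a
  proof -
    have "(\<Sum>b<i. Gm \<kappa> lam a b * v b) = (\<Sum>b<i. (if b = a then lam a * v a else 0) + (if \<kappa> a < \<kappa> b then v b else 0))"
      by (rule sum.cong) (auto simp: Gm_def)
    also have "\<dots> = lam a * v a + (\<Sum>b<i. if \<kappa> a < \<kappa> b then v b else 0)"
      using a by (simp add: sum.distrib)
    also have "(\<Sum>b<i. if \<kappa> a < \<kappa> b then v b else 0) = (\<Sum>b\<in>{b. b < i \<and> \<kappa> a < \<kappa> b}. v b)"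
      by (simp add: sum.If_cases lessThan_def Collect_conj_eq Int_commute)
    finally show ?thesis .
  qed
  have eq: "(\<Sum>b<i. Gm \<kappa> lam a b * v b) = lam c * v a" if a: "a < i" for a
  proof (cases "a = c")
    case True
    have "(\<Sum>b\<in>{b. b < i \<and> \<kappa> a < \<kappa> b}. v b) = 0"
      by (rule sum.neutral) (use True in \<open>auto simp: v_def\<close>)
    then show ?thesis using sumeq[OF a] True by (simp add: v_def)
  next
    case False
    show ?thesis
    proof (cases "\<kappa> a < \<kappa> c")
      case False2: False
      then have "\<kappa> c < \<kappa> a" using kinj[OF a c] False by linarith
      have "(\<Sum>b\<in>{b. b < i \<and> \<kappa> a < \<kappa> b}. v b) = 0"
        by (rule sum.neutral) (use \<open>\<kappa> c < \<kappa> a\<close> in \<open>auto simp: v_def\<close>)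
      moreover have "v a = 0" using False False2 by (simp add: v_def)
      ultimately show ?thesis using sumeq[OF a] by simp
    next
      case True
      have split: "{b. b < i \<and> \<kappa> a < \<kappa> b} = insert c (J a) \<union> {b. b < i \<and> \<kappa> c < \<kappa> b}"
        using True kinj c unfolding J_def by force
      have z: "(\<Sum>b\<in>{b. b < i \<and> \<kappa> c < \<kappa> b}. v b) = 0"
        by (rule sum.neutral) (auto simp: v_def)
      have disj: "insert c (J a) \<inter> {b. b < i \<and> \<kappa> c < \<kappa> b} = {}" unfolding J_def by auto
      have cJ: "c \<notin> J a" unfolding J_def by auto
      have s1: "(\<Sum>b\<in>{b. b < i \<and> \<kappa> a < \<kappa> b}. v b) = 1 + (\<Sum>b\<in>J a. v b)"
        unfolding split using disj z cJ Jfin by (simp add: sum.union_disjoint v_def)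
      have Je: "J e = {d \<in> J a. \<kappa> e < \<kappa> d}" if "e \<in> J a" for e
        using that True unfolding J_def by auto
      have ve: "v e = (\<rho> e - 1) * (\<Prod>d\<in>{d \<in> J a. \<kappa> e < \<kappa> d}. \<rho> d)" if "e \<in> J a" for e
      proof -
        have "e \<noteq> c" "\<kappa> e < \<kappa> c" using that unfolding J_def by auto
        then show ?thesis unfolding v_def Je[OF that] by (simp add: \<rho>_def)
      qed
      have injJ: "inj_on \<kappa> (J a)" using inj unfolding J_def by (rule inj_on_subset) auto
      have "(\<Sum>b\<in>J a. v b) = (\<Prod>d\<in>J a. \<rho> d) - 1"
        using telescope[OF Jfin injJ, of \<rho>] ve by simp
      then have s2: "(\<Sum>b\<in>{b. b < i \<and> \<kappa> a < \<kappa> b}. v b) = (\<Prod>d\<in>J a. \<rho> d)" using s1 by simp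
      have va: "v a = (1 / (lam c - lam a)) * (\<Prod>d\<in>J a. \<rho> d)" using False True by (simp add: v_def)
      have ne: "lam c - lam a \<noteq> 0" using sep[OF a False] by blast
      show ?thesis unfolding sumeq[OF a] s2 va using ne by (simp add: field_simps)
    qed
  qed
  have nz: "v a \<noteq> 0" if a: "a < i" "\<kappa> a \<le> \<kappa> c" for a
  proof (cases "a = c")
    case True then show ?thesis by (simp add: v_def)
  next
    case False
    then have lt: "\<kappa> a < \<kappa> c" using a kinj[OF a(1) c] by linarith
    have "(\<Prod>d\<in>J a. \<rho> d) \<noteq> 0"
      using rho_nz Jfin unfolding J_def by (auto simp: prod_zero_iff)
    moreover have "lam c - lam a \<noteq> 0" using sep[OF a(1) False] by blast
    ultimately show ?thesis using lt False by (simp add: v_def)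
  qed
  show ?thesis using eq nz by blast
qed

lemma pow_right:
  fixes T :: "complex mat"
  assumes T: "T \<in> carrier_mat i i" and ev: "\<forall>a<i. (\<Sum>b<i. T $$ (a, b) * v b) = l * v a"
  shows "a < i \<Longrightarrow> (\<Sum>b<i. (T ^\<^sub>m k) $$ (a, b) * v b) = l ^ k * v a"
proof (induction k arbitrary: a)
  case 0
  have "(\<Sum>b<i. (T ^\<^sub>m 0) $$ (a, b) * v b) = (\<Sum>b<i. (if b = a then v a else 0))"
    by (rule sum.cong) (use T 0 in auto)
  then show ?case using 0 by simp
next
  case (Suc k)
  have Tk: "T ^\<^sub>m k \<in> carrier_mat i i" using T by simp
  have "(\<Sum>b<i. (T ^\<^sub>m Suc k) $$ (a, b) * v b) = (\<Sum>b<i. (\<Sum>c<i. (T ^\<^sub>m k) $$ (a, c) * T $$ (c, b)) * v b)"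
    by (rule sum.cong) (use Suc.prems Tk T in \<open>auto simp del: index_mult_mat simp: mult_entry[OF Tk T]\<close>)
  also have "\<dots> = (\<Sum>b<i. \<Sum>c<i. (T ^\<^sub>m k) $$ (a, c) * T $$ (c, b) * v b)"
    by (simp add: sum_distrib_right)
  also have "\<dots> = (\<Sum>c<i. \<Sum>b<i. (T ^\<^sub>m k) $$ (a, c) * T $$ (c, b) * v b)"
    by (rule sum.swap)
  also have "\<dots> = (\<Sum>c<i. (T ^\<^sub>m k) $$ (a, c) * (\<Sum>b<i. T $$ (c, b) * v b))"
    by (simp add: sum_distrib_left mult.assoc)
  also have "\<dots> = (\<Sum>c<i. (T ^\<^sub>m k) $$ (a, c) * (l * v c))"
    by (rule sum.cong) (use ev in auto)
  also have "\<dots> = (\<Sum>c<i. (T ^\<^sub>m k) $$ (a, c) * v c * l)"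
    by (rule sum.cong) (simp_all add: algebra_simps)
  also have "\<dots> = (\<Sum>c<i. (T ^\<^sub>m k) $$ (a, c) * v c) * l"
    by (simp add: sum_distrib_right)
  finally show ?case using Suc by simp
qed

lemma pow_left:
  fixes T :: "complex mat"
  assumes T: "T \<in> carrier_mat i i" and ev: "\<forall>b<i. (\<Sum>a<i. w a * T $$ (a, b)) = l * w b"
  shows "b < i \<Longrightarrow> (\<Sum>a<i. w a * (T ^\<^sub>m k) $$ (a, b)) = l ^ k * w b"
proof (induction k arbitrary: b)
  case 0
  have "(\<Sum>a<i. w a * (T ^\<^sub>m 0) $$ (a, b)) = (\<Sum>a<i. (if a = b then w b else 0))"
    by (rule sum.cong) (use T 0 in auto)
  then show ?case using 0 by simp
next
  case (Suc k)
  have Tk: "T ^\<^sub>m k \<in> carrier_mat i i" using T by simp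
  have "(\<Sum>a<i. w a * (T ^\<^sub>m Suc k) $$ (a, b)) = (\<Sum>a<i. w a * (\<Sum>c<i. (T ^\<^sub>m k) $$ (a, c) * T $$ (c, b)))"
    by (rule sum.cong) (use Suc.prems Tk T in \<open>auto simp del: index_mult_mat simp: mult_entry[OF Tk T]\<close>)
  also have "\<dots> = (\<Sum>a<i. \<Sum>c<i. w a * (T ^\<^sub>m k) $$ (a, c) * T $$ (c, b))"
    by (simp add: sum_distrib_left mult.assoc)
  also have "\<dots> = (\<Sum>c<i. \<Sum>a<i. w a * (T ^\<^sub>m k) $$ (a, c) * T $$ (c, b))"
    by (rule sum.swap)
  also have "\<dots> = (\<Sum>c<i. (\<Sum>a<i. w a * (T ^\<^sub>m k) $$ (a, c)) * T $$ (c, b))"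
    by (simp add: sum_distrib_right)
  also have "\<dots> = (\<Sum>c<i. l ^ k * (w c * T $$ (c, b)))"
    by (rule sum.cong) (use Suc.IH in \<open>auto simp: mult_ac\<close>)
  also have "\<dots> = l ^ k * (\<Sum>c<i. w c * T $$ (c, b))"
    by (simp add: sum_distrib_left)
  also have "\<dots> = l ^ k * (l * w b)" using ev Suc.prems by simp
  finally show ?case by (simp add: mult_ac)
qed

lemma vander:
  fixes lam d :: "nat \<Rightarrow> complex"
  assumes inj: "inj_on lam {..<i}" and z: "\<forall>e<i. (\<Sum>k<i. d k * lam e ^ k) = 0"
  shows "\<forall>k<i. d k = 0"
proof (cases "i = 0")
  case True then show ?thesis by simp
next
  case False
  define p where "p = (\<Sum>k<i. monom (d k) k)"
  have cp: "coeff p j = (if j < i then d j else 0)" for j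
    unfolding p_def by (simp add: coeff_sum coeff_monom)
  have deg: "degree p \<le> i - 1"
    by (rule degree_le) (use False in \<open>auto simp: cp\<close>)
  have pv: "poly p x = (\<Sum>k<i. d k * x ^ k)" for x
    unfolding p_def by (simp add: poly_sum poly_monom)
  have card: "card (lam ` {..<i}) = i" using inj by (simp add: card_image)
  have "p = 0"
  proof (rule poly_eqI_degree[of "lam ` {..<i}"])
    fix x assume "x \<in> lam ` {..<i}"
    then show "poly p x = poly 0 x" using z pv by auto
  qed (use card deg False in auto)
  then show ?thesis using cp by (metis coeff_0)
qed

lemma key:
  fixes \<kappa> :: "nat \<Rightarrow> int" and lam d :: "nat \<Rightarrow> complex" and T :: "complex mat"
  assumes T: "T \<in> carrier_mat i i" and Te: "\<forall>a<i. \<forall>b<i. T $$ (a, b) = Gm \<kappa> lam a b"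
    and inj: "inj_on \<kappa> {..<i}"
    and lsep: "\<forall>c<i. \<forall>e<i. c \<noteq> e \<longrightarrow> lam c - lam e \<noteq> 0 \<and> lam c - lam e + 1 \<noteq> 0"
    and m: "m < i"
    and H1: "\<forall>b<i. (\<Sum>k<i. d k * (T ^\<^sub>m k) $$ (m, b)) = 0"
    and H2: "\<forall>a<i. (\<Sum>k<i. d k * (T ^\<^sub>m k) $$ (a, m)) = 0"
  shows "\<forall>k<i. d k = 0"
proof (rule vander)
  show "inj_on lam {..<i}" using lsep unfolding inj_on_def by auto
  show "\<forall>e<i. (\<Sum>k<i. d k * lam e ^ k) = 0"
  proof (intro allI impI)
    fix e assume e: "e < i"
    have sep: "\<And>d. d < i \<Longrightarrow> d \<noteq> e \<Longrightarrow> lam e - lam d \<noteq> 0 \<and> lam e - lam d + 1 \<noteq> 0"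
      using lsep e by blast
    show "(\<Sum>k<i. d k * lam e ^ k) = 0"
    proof (cases "\<kappa> m \<le> \<kappa> e")
      case True
      obtain v where ev: "\<forall>a<i. (\<Sum>b<i. Gm \<kappa> lam a b * v b) = lam e * v a"
        and nz: "\<forall>a<i. \<kappa> a \<le> \<kappa> e \<longrightarrow> v a \<noteq> 0"
        using eig[where \<kappa>=\<kappa> and i=i and c=e and lam=lam, OF inj e sep] by blast
      have ev': "\<forall>a<i. (\<Sum>b<i. T $$ (a, b) * v b) = lam e * v a"
        using ev Te by simp
      have "0 = (\<Sum>b<i. (\<Sum>k<i. d k * (T ^\<^sub>m k) $$ (m, b)) * v b)" using H1 by simp
      also have "\<dots> = (\<Sum>b<i. \<Sum>k<i. d k * (T ^\<^sub>m k) $$ (m, b) * v b)"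
        by (simp add: sum_distrib_right)
      also have "\<dots> = (\<Sum>k<i. \<Sum>b<i. d k * (T ^\<^sub>m k) $$ (m, b) * v b)"
        by (rule sum.swap)
      also have "\<dots> = (\<Sum>k<i. d k * (\<Sum>b<i. (T ^\<^sub>m k) $$ (m, b) * v b))"
        by (simp add: sum_distrib_left mult.assoc)
      also have "\<dots> = (\<Sum>k<i. d k * lam e ^ k) * v m"
        using pow_right[OF T ev' m] by (simp add: sum_distrib_right sum_distrib_left mult_ac)
      finally show ?thesis using nz m True by simp
    next
      case False
      have inj': "inj_on (\<lambda>a. - \<kappa> a) {..<i}" using inj unfolding inj_on_def by auto
      obtain v where ev: "\<forall>a<i. (\<Sum>b<i. Gm (\<lambda>a. - \<kappa> a) lam a b * v b) = lam e * v a"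
        and nz: "\<forall>a<i. - \<kappa> a \<le> - \<kappa> e \<longrightarrow> v a \<noteq> 0"
        using eig[where \<kappa>="\<lambda>a. - \<kappa> a" and i=i and c=e and lam=lam, OF inj' e sep] by blast
      have G: "Gm (\<lambda>a. - \<kappa> a) lam a b = Gm \<kappa> lam b a" for a b
        by (auto simp: Gm_def)
      have ev': "\<forall>a<i. (\<Sum>b<i. v b * T $$ (b, a)) = lam e * v a"
        using ev Te by (simp add: G mult.commute)
      have "0 = (\<Sum>a<i. v a * (\<Sum>k<i. d k * (T ^\<^sub>m k) $$ (a, m)))" using H2 by simp
      also have "\<dots> = (\<Sum>a<i. \<Sum>k<i. v a * (d k * (T ^\<^sub>m k) $$ (a, m)))"
        by (simp add: sum_distrib_left)
      also have "\<dots> = (\<Sum>k<i. \<Sum>a<i. v a * (d k * (T ^\<^sub>m k) $$ (a, m)))"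
        by (rule sum.swap)
      also have "\<dots> = (\<Sum>k<i. d k * (\<Sum>a<i. v a * (T ^\<^sub>m k) $$ (a, m)))"
        by (simp add: sum_distrib_left mult_ac)
      also have "\<dots> = (\<Sum>k<i. d k * lam e ^ k) * v m"
        using pow_left[OF T ev' m] by (simp add: sum_distrib_right sum_distrib_left mult_ac)
      finally show ?thesis using nz m False by simp
    qed
  qed
qed




lemma trace_mult_comm:
  assumes "X \<in> carrier_mat i i" "Y \<in> carrier_mat i i"
  shows "mat_trace (X * Y) = mat_trace (Y * X)"
proof -
  have "mat_trace (X * Y) = (\<Sum>a<i. \<Sum>c<i. X $$ (a, c) * Y $$ (c, a))"
    unfolding mat_trace_def using assms
    by (intro sum.cong) (auto simp del: index_mult_mat simp add: index_mult_mat(2,3) mult_entry[of _ i i _ i])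
  also have "\<dots> = (\<Sum>c<i. \<Sum>a<i. X $$ (a, c) * Y $$ (c, a))" by (rule sum.swap)
  also have "\<dots> = mat_trace (Y * X)"
    unfolding mat_trace_def using assms
    by (intro sum.cong) (auto simp del: index_mult_mat simp add: index_mult_mat(2,3) mult_entry[of _ i i _ i] mult.commute)
  finally show ?thesis .
qed

lemma trace_add:
  assumes "X \<in> carrier_mat i i" "Y \<in> carrier_mat i i"
  shows "mat_trace (X + Y) = mat_trace X + mat_trace Y"
  using assms unfolding mat_trace_def by (simp add: sum.distrib)

lemma pow_mat_add: assumes A: "(A :: complex mat) \<in> carrier_mat n n"
  shows "A ^\<^sub>m (k + l) = A ^\<^sub>m k * A ^\<^sub>m l"
proof (induction l)
  case 0
  then show ?case using A by simp
next
  case (Suc l)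
  then show ?case using A by (simp add: assoc_mult_mat[of _ n n _ n _ n])
qed

fun QQ :: "nat \<Rightarrow> complex mat \<Rightarrow> complex mat \<Rightarrow> nat \<Rightarrow> complex mat" where
  "QQ i A B 0 = 0\<^sub>m i i"
| "QQ i A B (Suc j) = QQ i A B j * A + A ^\<^sub>m j * B"

lemma QQ_carrier: "A \<in> carrier_mat i i \<Longrightarrow> B \<in> carrier_mat i i \<Longrightarrow> QQ i A B j \<in> carrier_mat i i"
  by (induction j) auto

lemma QQ_trace:
  assumes A: "A \<in> carrier_mat i i" and B: "B \<in> carrier_mat i i"
  shows "mat_trace (QQ i A B j * A ^\<^sub>m k) = of_nat j * mat_trace (A ^\<^sub>m (j + k - 1) * B)"
proof (induction j arbitrary: k)
  case 0
  have "mat_trace (0\<^sub>m i i * A ^\<^sub>m k) = 0"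
    unfolding mat_trace_def using A by (simp)
  then show ?case by simp
next
  case (Suc j)
  have Q: "QQ i A B j \<in> carrier_mat i i" using QQ_carrier[OF A B] .
  have Ak: "A ^\<^sub>m k \<in> carrier_mat i i" "A ^\<^sub>m j \<in> carrier_mat i i" using A by auto
  have "QQ i A B (Suc j) * A ^\<^sub>m k = QQ i A B j * A ^\<^sub>m (Suc k) + A ^\<^sub>m j * B * A ^\<^sub>m k"
  proof -
    have "QQ i A B (Suc j) * A ^\<^sub>m k = QQ i A B j * A * A ^\<^sub>m k + A ^\<^sub>m j * B * A ^\<^sub>m k"
    proof -
      have c1: "QQ i A B j * A \<in> carrier_mat i i" "A ^\<^sub>m j * B \<in> carrier_mat i i" using Q A B by auto
      show ?thesis using add_mult_distrib_mat[OF c1 Ak(1)] by simp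
    qed
    moreover have "QQ i A B j * A * A ^\<^sub>m k = QQ i A B j * A ^\<^sub>m (Suc k)"
    proof -
      have "A * A ^\<^sub>m k = A ^\<^sub>m (Suc k)" using pow_mat_add[OF A, of 1 k] A by simp
      then show ?thesis using Q A Ak by (simp add: assoc_mult_mat[of _ i i _ i _ i])
    qed
    ultimately show ?thesis by simp
  qed
  moreover have "mat_trace (QQ i A B j * A ^\<^sub>m (Suc k) + A ^\<^sub>m j * B * A ^\<^sub>m k) = mat_trace (QQ i A B j * A ^\<^sub>m (Suc k)) + mat_trace (A ^\<^sub>m j * B * A ^\<^sub>m k)"
    by (rule trace_add[of _ i]) (use Q A B Ak in auto)
  ultimately have "mat_trace (QQ i A B (Suc j) * A ^\<^sub>m k) = mat_trace (QQ i A B j * A ^\<^sub>m (Suc k)) + mat_trace (A ^\<^sub>m j * B * A ^\<^sub>m k)"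
    by simp
  also have "mat_trace (A ^\<^sub>m j * B * A ^\<^sub>m k) = mat_trace (A ^\<^sub>m (j + k) * B)"
  proof -
    have "mat_trace (A ^\<^sub>m j * B * A ^\<^sub>m k) = mat_trace (A ^\<^sub>m k * (A ^\<^sub>m j * B))"
      using trace_mult_comm[of "A ^\<^sub>m j * B" i "A ^\<^sub>m k"] Ak B by simp
    also have "\<dots> = mat_trace (A ^\<^sub>m (k + j) * B)"
      using Ak B pow_mat_add[OF A, of k j] by (simp add: assoc_mult_mat[of _ i i _ i _ i])
    finally show ?thesis by (simp add: add.commute)
  qed
  finally show ?case using Suc.IH[of "Suc k"] by (simp add: algebra_simps)
qed

lemma QQ_trace0:
  assumes A: "A \<in> carrier_mat i i" and B: "B \<in> carrier_mat i i"
  shows "mat_trace (QQ i A B j) = of_nat j * mat_trace (A ^\<^sub>m (j - 1) * B)"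
  using QQ_trace[OF A B, of j 0] QQ_carrier[OF A B, of j] A by simp

lemma add_zero_smult: "A \<in> carrier_mat i i \<Longrightarrow> B \<in> carrier_mat i i \<Longrightarrow> A + (0::complex) \<cdot>\<^sub>m B = A"
  by (rule eq_matI) auto

lemma deriv_entry:
  assumes A: "A \<in> carrier_mat i i" and B: "B \<in> carrier_mat i i"
  shows "a < i \<Longrightarrow> b < i \<Longrightarrow> ((\<lambda>t. ((A + t \<cdot>\<^sub>m B) ^\<^sub>m j) $$ (a, b)) has_field_derivative (QQ i A B j) $$ (a, b)) (at 0)"
proof (induction j arbitrary: a b)
  case 0
  have "(\<lambda>t. ((A + t \<cdot>\<^sub>m B) ^\<^sub>m 0) $$ (a, b)) = (\<lambda>t. (if a = b then 1 else 0))"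
    using 0 A B by auto
  then show ?case using 0 by simp
next
  case (Suc j)
  have Mc: "\<And>t. (A + t \<cdot>\<^sub>m B) \<in> carrier_mat i i" using A B by simp
  have f: "(\<lambda>t. ((A + t \<cdot>\<^sub>m B) ^\<^sub>m Suc j) $$ (a, b)) =
      (\<lambda>t. \<Sum>c<i. ((A + t \<cdot>\<^sub>m B) ^\<^sub>m j) $$ (a, c) * (A $$ (c, b) + t * B $$ (c, b)))"
  proof
    fix t
    have Pc: "(A + t \<cdot>\<^sub>m B) ^\<^sub>m j \<in> carrier_mat i i" using Mc by simp
    show "((A + t \<cdot>\<^sub>m B) ^\<^sub>m Suc j) $$ (a, b) = (\<Sum>c<i. ((A + t \<cdot>\<^sub>m B) ^\<^sub>m j) $$ (a, c) * (A $$ (c, b) + t * B $$ (c, b)))"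
    proof -
      have "((A + t \<cdot>\<^sub>m B) ^\<^sub>m Suc j) $$ (a, b) = (\<Sum>c<i. ((A + t \<cdot>\<^sub>m B) ^\<^sub>m j) $$ (a, c) * (A + t \<cdot>\<^sub>m B) $$ (c, b))"
        using mult_entry[OF Pc Mc Suc.prems] by (simp del: index_mult_mat)
      also have "\<dots> = (\<Sum>c<i. ((A + t \<cdot>\<^sub>m B) ^\<^sub>m j) $$ (a, c) * (A $$ (c, b) + t * B $$ (c, b)))"
        by (rule sum.cong) (use A B Suc.prems in auto)
      finally show ?thesis .
    qed
  qed
  have d: "((\<lambda>t. \<Sum>c<i. ((A + t \<cdot>\<^sub>m B) ^\<^sub>m j) $$ (a, c) * (A $$ (c, b) + t * B $$ (c, b))) has_field_derivative
      (\<Sum>c<i. (QQ i A B j) $$ (a, c) * (A $$ (c, b) + 0 * B $$ (c, b)) + B $$ (c, b) * ((A + 0 \<cdot>\<^sub>m B) ^\<^sub>m j) $$ (a, c))) (at 0)"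
  proof (rule DERIV_sum)
    fix c assume c: "c \<in> {..<i}"
    have d1: "((\<lambda>t. ((A + t \<cdot>\<^sub>m B) ^\<^sub>m j) $$ (a, c)) has_field_derivative (QQ i A B j) $$ (a, c)) (at 0)"
      using Suc.IH Suc.prems c by simp
    have d2: "((\<lambda>t. A $$ (c, b) + t * B $$ (c, b)) has_field_derivative B $$ (c, b)) (at 0)"
      by (auto intro!: derivative_eq_intros)
    show "((\<lambda>t. ((A + t \<cdot>\<^sub>m B) ^\<^sub>m j) $$ (a, c) * (A $$ (c, b) + t * B $$ (c, b))) has_field_derivative
      (QQ i A B j) $$ (a, c) * (A $$ (c, b) + 0 * B $$ (c, b)) + B $$ (c, b) * ((A + 0 \<cdot>\<^sub>m B) ^\<^sub>m j) $$ (a, c)) (at 0)"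
      using DERIV_mult[OF d1 d2] by simp
  qed
  have Q: "QQ i A B j \<in> carrier_mat i i" using QQ_carrier[OF A B] .
  have Aj: "A ^\<^sub>m j \<in> carrier_mat i i" using A by simp
  have "(\<Sum>c<i. (QQ i A B j) $$ (a, c) * (A $$ (c, b) + 0 * B $$ (c, b)) + B $$ (c, b) * ((A + 0 \<cdot>\<^sub>m B) ^\<^sub>m j) $$ (a, c))
      = (\<Sum>c<i. (QQ i A B j) $$ (a, c) * A $$ (c, b)) + (\<Sum>c<i. (A ^\<^sub>m j) $$ (a, c) * B $$ (c, b))"
    using add_zero_smult[OF A B] by (simp add: sum.distrib mult.commute)
  also have "\<dots> = (QQ i A B (Suc j)) $$ (a, b)"
    using mult_entry[OF Q A Suc.prems] mult_entry[OF Aj B Suc.prems] Suc.prems Q A B Aj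
    by (simp del: index_mult_mat add: index_mult_mat(2,3))
  finally show ?case using d f by (metis DERIV_cong)
qed

lemma upper_left_carrier: "upper_left i X \<in> carrier_mat i i" by (simp add: upper_left_def)

lemma upper_left_lin:
  assumes "X \<in> carrier_mat N N" "Y \<in> carrier_mat N N" "i \<le> N"
  shows "upper_left i (X + t \<cdot>\<^sub>m Y) = upper_left i X + t \<cdot>\<^sub>m upper_left i Y"
  by (rule eq_matI) (use assms in \<open>auto simp: upper_left_def\<close>)

lemma differential_formula:
  assumes X: "X \<in> carrier_mat N N" and Y: "Y \<in> carrier_mat N N" and i: "i \<le> N"
  shows "differential (f_ij i j) X Y = of_nat j * mat_trace (upper_left i X ^\<^sub>m (j - 1) * upper_left i Y)"
proof -
  define A where "A = upper_left i X"
  define B where "B = upper_left i Y"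
  have A: "A \<in> carrier_mat i i" and B: "B \<in> carrier_mat i i" unfolding A_def B_def by (rule upper_left_carrier)+
  have f: "(\<lambda>t. f_ij i j (X + t \<cdot>\<^sub>m Y)) = (\<lambda>t. \<Sum>a<i. ((A + t \<cdot>\<^sub>m B) ^\<^sub>m j) $$ (a, a))"
    unfolding f_ij_def mat_trace_def A_def B_def using upper_left_lin[OF X Y i] A B
    by (simp add: A_def B_def)
  have "((\<lambda>t. \<Sum>a<i. ((A + t \<cdot>\<^sub>m B) ^\<^sub>m j) $$ (a, a)) has_field_derivative (\<Sum>a<i. (QQ i A B j) $$ (a, a))) (at 0)"
    by (rule DERIV_sum) (use deriv_entry[OF A B] in auto)
  moreover have "(\<Sum>a<i. (QQ i A B j) $$ (a, a)) = mat_trace (QQ i A B j)"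
    unfolding mat_trace_def using QQ_carrier[OF A B, of j] by simp
  ultimately have "deriv (\<lambda>t. f_ij i j (X + t \<cdot>\<^sub>m Y)) 0 = mat_trace (QQ i A B j)"
    unfolding f by (rule DERIV_imp_deriv[OF DERIV_cong])
  then show ?thesis unfolding differential_def using QQ_trace0[OF A B, of j] by (simp add: A_def B_def)
qed




lemma GZ_finite: "finite (GZ_index N)"
proof -
  have "GZ_index N \<subseteq> {..N} \<times> {..N}" unfolding GZ_index_def by auto
  then show ?thesis by (rule finite_subset) simp
qed

lemma GZ_level:
  assumes i: "1 \<le> i" "i \<le> N" and zero: "\<And>p. p \<in> GZ_index N \<Longrightarrow> fst p \<noteq> i \<Longrightarrow> g p = 0"
  shows "(\<Sum>p\<in>GZ_index N. g p) = (\<Sum>k<i. g (i, Suc k))"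
proof -
  have sub: "(\<lambda>k. (i, Suc k)) ` {..<i} \<subseteq> GZ_index N" using i unfolding GZ_index_def by auto
  have "(\<Sum>p\<in>GZ_index N. g p) = (\<Sum>p\<in>(\<lambda>k. (i, Suc k)) ` {..<i}. g p)"
  proof (rule sum.mono_neutral_right[OF GZ_finite sub])
    show "\<forall>p\<in>GZ_index N - (\<lambda>k. (i, Suc k)) ` {..<i}. g p = 0"
    proof
      fix p assume p: "p \<in> GZ_index N - (\<lambda>k. (i, Suc k)) ` {..<i}"
      obtain x y where xy: "p = (x, y)" by (cases p)
      have "x \<noteq> i"
      proof
        assume "x = i"
        moreover have "1 \<le> y" "y \<le> x" using p xy unfolding GZ_index_def by auto
        ultimately have "p \<in> (\<lambda>k. (i, Suc k)) ` {..<i}" using xy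
          by (auto intro!: image_eqI[of _ _ "y - 1"])
        then show False using p by blast
      qed
      then show "g p = 0" using zero p xy by auto
    qed
  qed
  also have "\<dots> = (\<Sum>k<i. g (i, Suc k))"
    by (rule sum.reindex_cong[where l = "\<lambda>k. (i, Suc k)"]) (auto simp: inj_on_def)
  finally show ?thesis .
qed

lemma trace_EE:
  assumes M: "M \<in> carrier_mat i i" and i: "i \<le> N" and ab: "a < N" "b < N"
  shows "mat_trace (M * upper_left i (EE N b a)) = (if a < i \<and> b < i then M $$ (a, b) else 0)"
proof -
  have U: "upper_left i (EE N b a) \<in> carrier_mat i i" by (rule upper_left_carrier)
  have Ue: "upper_left i (EE N b a) $$ (c, k) = (if c = b \<and> k = a then 1 else 0)" if "c < i" "k < i" for c k
    using that i by (simp add: upper_left_def EE_index)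
  have "mat_trace (M * upper_left i (EE N b a)) = (\<Sum>k<i. \<Sum>c<i. M $$ (k, c) * (if c = b \<and> k = a then 1 else 0))"
    unfolding mat_trace_def using M U
    by (intro sum.cong) (auto simp del: index_mult_mat simp add: index_mult_mat(2,3) mult_entry[OF M U] Ue)
  also have "\<dots> = (\<Sum>k<i. if k = a \<and> b < i then M $$ (k, b) else 0)"
  proof (rule sum.cong)
    fix k assume k: "k \<in> {..<i}"
    show "(\<Sum>c<i. M $$ (k, c) * (if c = b \<and> k = a then 1 else 0)) = (if k = a \<and> b < i then M $$ (k, b) else 0)"
    proof (cases "k = a")
      case True
      have "(\<Sum>c<i. M $$ (k, c) * (if c = b \<and> k = a then 1 else 0)) = (\<Sum>c<i. if c = b then M $$ (k, c) else 0)"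
        by (rule sum.cong) (use True in auto)
      also have "\<dots> = (if b < i then M $$ (k, b) else 0)" by (simp add: sum.delta')
      finally show ?thesis using True by simp
    next
      case False
      then show ?thesis by simp
    qed
  qed simp
  also have "\<dots> = (if a < i \<and> b < i then M $$ (a, b) else 0)"
  proof (cases "b < i")
    case True then show ?thesis by (simp add: sum.delta')
  next
    case False then show ?thesis by simp
  qed
  finally show ?thesis .
qed

context borel_setup
begin

lemma S_iff: assumes "a < N" "b < N" "a \<noteq> b" shows "(a, b) \<in> S \<longleftrightarrow> rk N S a < rk N S b"
proof
  assume "(a, b) \<in> S" then show "rk N S a < rk N S b" using spo.rk_less[OF spoS] assms by blast
next
  assume lt: "rk N S a < rk N S b"
  show "(a, b) \<in> S"
  proof (rule ccontr)
    assume "(a, b) \<notin> S"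
    then have "(b, a) \<in> S" using S_total assms by blast
    then have "rk N S b < rk N S a" using spo.rk_less[OF spoS] assms by blast
    then show False using lt by simp
  qed
qed

lemma rk_inj: "inj_on (\<lambda>a. int (rk N S a)) {..<N}"
proof (rule inj_onI)
  fix a b assume ab: "a \<in> {..<N}" "b \<in> {..<N}" "int (rk N S a) = int (rk N S b)"
  show "a = b"
  proof (rule ccontr)
    assume "a \<noteq> b"
    then have "(a, b) \<in> S \<or> (b, a) \<in> S" using S_total ab by auto
    then show False using S_iff ab \<open>a \<noteq> b\<close> by auto
  qed
qed

definition lam :: "nat \<Rightarrow> complex" where "lam a = of_nat (2 * a)"

definition Xm :: "complex mat" where
  "Xm = mat N N (\<lambda>(a, b). if a = b then lam a else if (a, b) \<in> S then 1 else 0)"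

lemma Xm_carrier: "Xm \<in> carrier_mat N N" by (simp add: Xm_def)

lemma Xm_B: "Xm \<in> B"
  using B_eq Xm_carrier unfolding AR_def by (auto simp: Xm_def)

lemma lam_sep: "lam c - lam e \<noteq> 0 \<and> lam c - lam e + 1 \<noteq> 0" if "c \<noteq> e" for c e
proof
  show "lam c - lam e \<noteq> 0" using that by (simp add: lam_def)
  show "lam c - lam e + 1 \<noteq> 0"
  proof
    assume "lam c - lam e + 1 = 0"
    then have "(of_nat (2 * c + 1) :: complex) = of_nat (2 * e)" by (simp add: lam_def algebra_simps)
    then have "2 * c + 1 = 2 * e" by (simp only: of_nat_eq_iff)
    then show False by presburger
  qed
qed

lemma T_entries: assumes "i \<le> N" "a < i" "b < i"
  shows "upper_left i Xm $$ (a, b) = Gm (\<lambda>a. int (rk N S a)) lam a b"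
  using assms S_iff[of a b] by (auto simp: upper_left_def Xm_def Gm_def)

theorem Xm_sr: "strongly_regular N Xm"
  unfolding strongly_regular_def
proof (intro conjI allI impI ballI)
  show "Xm \<in> carrier_mat N N" by (rule Xm_carrier)
  fix c :: "nat \<times> nat \<Rightarrow> complex"
  assume hyp: "\<forall>y\<in>carrier_mat N N. (\<Sum>(i, j)\<in>GZ_index N. c (i, j) * differential (f_ij i j) Xm y) = 0"
  define T where "T i = upper_left i Xm" for i
  have H: "(\<Sum>p\<in>GZ_index N. c p * (of_nat (snd p) * (if a < fst p \<and> b < fst p then (T (fst p) ^\<^sub>m (snd p - 1)) $$ (a, b) else 0))) = 0"
    if ab: "a < N" "b < N" for a b
  proof -
    have "(\<Sum>(i, j)\<in>GZ_index N. c (i, j) * differential (f_ij i j) Xm (EE N b a)) = 0"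
      using hyp by simp
    moreover have "(\<Sum>(i, j)\<in>GZ_index N. c (i, j) * differential (f_ij i j) Xm (EE N b a)) =
      (\<Sum>p\<in>GZ_index N. c p * (of_nat (snd p) * (if a < fst p \<and> b < fst p then (T (fst p) ^\<^sub>m (snd p - 1)) $$ (a, b) else 0)))"
    proof (rule sum.cong)
      fix p assume p: "p \<in> GZ_index N"
      obtain i j where ij: "p = (i, j)" by (cases p)
      have iN: "i \<le> N" using p ij unfolding GZ_index_def by auto
      have "differential (f_ij i j) Xm (EE N b a) = of_nat j * mat_trace (T i ^\<^sub>m (j - 1) * upper_left i (EE N b a))"
        unfolding T_def by (rule differential_formula[OF Xm_carrier EE_carrier iN])
      also have "\<dots> = of_nat j * (if a < i \<and> b < i then (T i ^\<^sub>m (j - 1)) $$ (a, b) else 0)"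
        using trace_EE[of "T i ^\<^sub>m (j - 1)" i N a b] iN ab by (simp add: T_def upper_left_carrier)
      finally show "(case p of (i, j) \<Rightarrow> c (i, j) * differential (f_ij i j) Xm (EE N b a)) =
        c p * (of_nat (snd p) * (if a < fst p \<and> b < fst p then (T (fst p) ^\<^sub>m (snd p - 1)) $$ (a, b) else 0))"
        using ij by simp
    qed simp
    ultimately show ?thesis by simp
  qed
  have main: "\<forall>j. (i, j) \<in> GZ_index N \<longrightarrow> c (i, j) = 0" for i
  proof (induction "N - i" arbitrary: i rule: less_induct)
    case less
    show ?case
    proof (cases "1 \<le> i \<and> i \<le> N")
      case False
      then show ?thesis unfolding GZ_index_def by auto
    next
      case True
      then have i1: "1 \<le> i" and iN: "i \<le> N" by auto
      define m where "m = i - 1"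
      have m: "m < i" "m < N" using i1 iN by (auto simp: m_def)
      define d where "d k = c (i, Suc k) * of_nat (Suc k)" for k
      have Tc: "T i \<in> carrier_mat i i" by (simp add: T_def upper_left_carrier)
      have zero_other: "c p = 0" if "p \<in> GZ_index N" "fst p > i" for p
      proof -
        obtain x y where xy: "p = (x, y)" by (cases p)
        have "N - x < N - i" using that xy unfolding GZ_index_def by auto
        then show ?thesis using less[of x] that xy by auto
      qed
      have H1: "\<forall>b<i. (\<Sum>k<i. d k * (T i ^\<^sub>m k) $$ (m, b)) = 0"
      proof (intro allI impI)
        fix b assume b: "b < i"
        have "0 = (\<Sum>p\<in>GZ_index N. c p * (of_nat (snd p) * (if m < fst p \<and> b < fst p then (T (fst p) ^\<^sub>m (snd p - 1)) $$ (m, b) else 0)))"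
          using H[of m b] m b iN by simp
        also have "\<dots> = (\<Sum>k<i. c (i, Suc k) * (of_nat (snd (i, Suc k)) * (if m < fst (i, Suc k) \<and> b < fst (i, Suc k) then (T (fst (i, Suc k)) ^\<^sub>m (snd (i, Suc k) - 1)) $$ (m, b) else 0)))"
        proof (rule GZ_level[where g = "\<lambda>p. c p * (of_nat (snd p) * (if m < fst p \<and> b < fst p then (T (fst p) ^\<^sub>m (snd p - 1)) $$ (m, b) else 0))", OF i1 iN])
          fix p assume p: "p \<in> GZ_index N" "fst p \<noteq> i"
          show "c p * (of_nat (snd p) * (if m < fst p \<and> b < fst p then (T (fst p) ^\<^sub>m (snd p - 1)) $$ (m, b) else 0)) = 0"
          proof (cases "fst p > i")
            case True then show ?thesis using zero_other p by simp
          next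
            case False
            then have "\<not> m < fst p" using p(2) by (auto simp: m_def)
            then show ?thesis by simp
          qed
        qed
        also have "\<dots> = (\<Sum>k<i. d k * (T i ^\<^sub>m k) $$ (m, b))"
          using m b by (simp add: d_def mult_ac)
        finally show "(\<Sum>k<i. d k * (T i ^\<^sub>m k) $$ (m, b)) = 0" by simp
      qed
      have H2: "\<forall>a<i. (\<Sum>k<i. d k * (T i ^\<^sub>m k) $$ (a, m)) = 0"
      proof (intro allI impI)
        fix a assume a: "a < i"
        have "0 = (\<Sum>p\<in>GZ_index N. c p * (of_nat (snd p) * (if a < fst p \<and> m < fst p then (T (fst p) ^\<^sub>m (snd p - 1)) $$ (a, m) else 0)))"
          using H[of a m] m a iN by simp
        also have "\<dots> = (\<Sum>k<i. c (i, Suc k) * (of_nat (snd (i, Suc k)) * (if a < fst (i, Suc k) \<and> m < fst (i, Suc k) then (T (fst (i, Suc k)) ^\<^sub>m (snd (i, Suc k) - 1)) $$ (a, m) else 0)))"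
        proof (rule GZ_level[where g = "\<lambda>p. c p * (of_nat (snd p) * (if a < fst p \<and> m < fst p then (T (fst p) ^\<^sub>m (snd p - 1)) $$ (a, m) else 0))", OF i1 iN])
          fix p assume p: "p \<in> GZ_index N" "fst p \<noteq> i"
          show "c p * (of_nat (snd p) * (if a < fst p \<and> m < fst p then (T (fst p) ^\<^sub>m (snd p - 1)) $$ (a, m) else 0)) = 0"
          proof (cases "fst p > i")
            case True then show ?thesis using zero_other p by simp
          next
            case False
            then have "\<not> m < fst p" using p(2) by (auto simp: m_def)
            then show ?thesis by simp
          qed
        qed
        also have "\<dots> = (\<Sum>k<i. d k * (T i ^\<^sub>m k) $$ (a, m))"
          using m a by (simp add: d_def mult_ac)
        finally show "(\<Sum>k<i. d k * (T i ^\<^sub>m k) $$ (a, m)) = 0" by simp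
      qed
      have Te: "\<forall>a<i. \<forall>b<i. T i $$ (a, b) = Gm (\<lambda>a. int (rk N S a)) lam a b"
        using T_entries iN by (simp add: T_def)
      have inj: "inj_on (\<lambda>a. int (rk N S a)) {..<i}"
        by (rule inj_on_subset[OF rk_inj]) (use iN in auto)
      have lsep: "\<forall>c<i. \<forall>e<i. c \<noteq> e \<longrightarrow> lam c - lam e \<noteq> 0 \<and> lam c - lam e + 1 \<noteq> 0"
        using lam_sep by blast
      have dz: "\<forall>k<i. d k = 0" by (rule key[OF Tc Te inj lsep m(1) H1 H2])
      show ?thesis
      proof (intro allI impI)
        fix j assume "(i, j) \<in> GZ_index N"
        then have j: "1 \<le> j" "j \<le> i" unfolding GZ_index_def by auto
        then have "d (j - 1) = 0" using dz by simp
        then show "c (i, j) = 0" using j by (simp add: d_def)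
      qed
    qed
  qed
  fix p assume "p \<in> GZ_index N"
  then show "c p = 0" using main[of "fst p"] by (cases p) auto
qed

end



theorem proposition5p2:
  fixes n :: nat and B :: "complex mat set"
  assumes "borel_subalgebra (n + 1) B"
    and "diagonal_cartan (n + 1) \<subseteq> B"
  shows "\<exists>x\<in>B. strongly_regular (n + 1) x"
proof -
  interpret bs: borel_setup "n + 1" B
    by unfold_locales (use assms in auto)
  show ?thesis using bs.Xm_B bs.Xm_sr by blast
qed

end
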